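(* Let $d\ge1$ and let $S$ be a compact convex subset of a $d$-dimensional affine subspace of a Euclidean space, with nonempty relative interior, and let $\mathrm{vol}(S)$ denote its $d$-dimensional Lebesgue measure. Let $F:S\to[a,b]$ ($a<b$) be concave, and let $\eta>0$ satisfy $\eta(b-a)\ge d$. Then $$\sup_{\mathbf x\in S}F(\mathbf x)\le \frac1\eta\ln\left[\frac{\int_S e^{\eta F(\mathbf x)}\,d\mathbf x}{\mathrm{vol}(S)}\right]+\frac d\eta\ln\left(\frac{\eta e(b-a)}{d}\right).$$
   Context: The integral is with respect to $d$-dimensional Lebesgue measure on the affine hull of $S$. *)

theory Defs
  imports "HOL-Analysis.Analysis"
begin

text \<open>The d-dimensional Lebesgue measure on A is the pushforward of
  Lebesgue measure on 'b along g (independent of the choice of g).\<close>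
definition affine_isometric_param :: "('b::euclidean_space \<Rightarrow> 'a::euclidean_space) \<Rightarrow> 'a set \<Rightarrow> bool" where
  "affine_isometric_param g A \<longleftrightarrow>
     (\<exists>p L. linear L \<and> (\<forall>x. norm (L x) = norm x) \<and> (\<forall>y. g y = p + L y)) \<and> range g = A"

end

theory Submission imports Defs begin


lemma integrable_sub:
  fixes T :: "'b::euclidean_space set" and G :: "'b \<Rightarrow> real"
  assumes T: "compact T" "convex T" and GB: "\<forall>y\<in>T. G y \<in> {a..b}" and conc: "concave_on T G"
    and E: "E \<subseteq> T" "E \<in> sets lebesgue" and eta: "\<eta> > 0"
  shows "(\<lambda>y. exp (\<eta> * G y)) integrable_on E"
proof -
  let ?h = "\<lambda>y. exp (\<eta> * G y)"
  have "convex_on T (\<lambda>x. - G x)" using conc unfolding concave_on_def .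
  then have "convex_on (interior T) (\<lambda>x. - G x)"
    by (rule convex_on_subset) (use interior_subset convex_interior T(2) in auto)
  then have "continuous_on (interior T) (\<lambda>x. - G x)"
    by (intro convex_on_continuous open_interior)
  then have "continuous_on (interior T) (\<lambda>x. - (- G x))"
    by (rule continuous_on_minus)
  then have "continuous_on (interior T) G" by simp
  then have c: "continuous_on (interior T) ?h"
    by (intro continuous_intros)
  have li: "interior T \<in> sets lebesgue" by simp
  have "?h \<in> borel_measurable (lebesgue_on (interior T))"
    by (rule continuous_imp_measurable_on_sets_lebesgue[OF c li])
  then have m1: "?h measurable_on interior T"
    by (simp only: measurable_on_iff_borel_measurable[OF li])
  have "closure T = T" using T(1) compact_imp_closed closure_closed by metis
  then have "T - interior T \<subseteq> frontier T" unfolding frontier_def by simp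
  then have "negligible (T - interior T)"
    by (rule negligible_subset[OF negligible_convex_frontier[OF T(2)]])
  moreover have "interior T - T = {}" using interior_subset by blast
  ultimately have "negligible ((interior T - T) \<union> (T - interior T))" by simp
  then have "?h measurable_on T"
    by (rule measurable_on_spike_set[OF m1])
  moreover have LT: "T \<in> sets lebesgue"
    using lmeasurable_compact[OF T(1)] by (rule fmeasurableD)
  ultimately have "?h \<in> borel_measurable (lebesgue_on T)"
    by (simp only: measurable_on_iff_borel_measurable[OF LT])
  then have hm: "?h \<in> borel_measurable (lebesgue_on E)"
    by (rule measurable_restrict_mono) (rule E(1))
  have "bounded E" using compact_imp_bounded[OF T(1)] E(1) by (rule bounded_subset)
  then have "E \<in> lmeasurable"
    using E(2) by (rule bounded_set_imp_lmeasurable)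
  then have ci: "(\<lambda>y. exp (\<eta> * b)) integrable_on E"
    by (rule integrable_on_const)
  show ?thesis
  proof (rule measurable_bounded_by_integrable_imp_integrable[OF hm ci _ E(2)])
    fix x assume "x \<in> E"
    then have "G x \<le> b" using GB E by auto
    then show "norm (?h x) \<le> exp (\<eta> * b)" using eta by simp
  qed
qed


lemma core:
  fixes T :: "'b::euclidean_space set" and G :: "'b \<Rightarrow> real"
  assumes T: "compact T" "convex T" "interior T \<noteq> {}" and GB: "\<forall>y\<in>T. G y \<in> {a..b}"
    and conc: "concave_on T G" and ab: "a < b" and eta: "\<eta> > 0"
    and big: "\<eta> * (b - a) \<ge> real DIM('b)" and x0: "x0 \<in> T"
  shows "G x0 \<le> 1 / \<eta> * ln (integral T (\<lambda>y. exp (\<eta> * G y)) / measure lebesgue T)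
           + real DIM('b) / \<eta> * ln (\<eta> * exp 1 * (b - a) / real DIM('b))"
proof -
  define d where "d = real DIM('b)"
  have d0: "d > 0" unfolding d_def by simp
  define s where "s = d / (\<eta> * (b - a))"
  have s0: "s > 0" unfolding s_def using d0 eta ab by simp
  have s1: "s \<le> 1" unfolding s_def using big d_def eta ab by simp
  define c where "c = exp (\<eta> * G x0 - d)"
  have c0: "c > 0" unfolding c_def by simp
  define Ts where "Ts = (\<lambda>z. s *\<^sub>R z + (1 - s) *\<^sub>R x0) ` T"
  have TsT: "Ts \<subseteq> T"
  proof
    fix y assume "y \<in> Ts"
    then obtain z where z: "z \<in> T" "y = s *\<^sub>R z + (1 - s) *\<^sub>R x0" unfolding Ts_def by auto
    then show "y \<in> T" using T(2) x0 s0 s1 unfolding convex_def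
      by (metis add.commute diff_ge_0_iff_ge le_add_diff_inverse less_eq_real_def)
  qed
  have Tsc: "compact Ts" unfolding Ts_def
    by (intro compact_continuous_image T(1) continuous_intros)
  have LTs: "Ts \<in> lmeasurable" using Tsc lmeasurable_compact by blast
  have LT: "T \<in> lmeasurable" using T lmeasurable_compact by blast
  have mTs: "measure lebesgue Ts = s ^ DIM('b) * measure lebesgue T"
    using measure_lebesgue_affine[of s "(1 - s) *\<^sub>R x0" T] s0 unfolding Ts_def by simp
  have V0: "measure lebesgue T > 0"
  proof -
    have "\<not> negligible (interior T)" using open_not_negligible T(3) by auto
    then have "measure lebesgue (interior T) \<noteq> 0"
    proof -
      have "bounded (interior T)" using T(1) compact_imp_bounded bounded_subset interior_subset by blast
      moreover have "interior T \<in> sets lebesgue" by simp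
      ultimately have "interior T \<in> lmeasurable" using bounded_set_imp_lmeasurable by blast
      then show ?thesis using negligible_iff_measure0 \<open>\<not> negligible (interior T)\<close> by blast
    qed
    moreover have "measure lebesgue (interior T) \<le> measure lebesgue T"
      by (intro measure_mono_fmeasurable interior_subset LT) simp
    ultimately show ?thesis using measure_nonneg[of lebesgue "interior T"] by linarith
  qed
  let ?h = "\<lambda>y. exp (\<eta> * G y)"
  have hT: "?h integrable_on T"
    using integrable_sub[OF T(1,2) GB conc _ _ eta] LT by blast
  have hTs: "?h integrable_on Ts"
    using integrable_sub[OF T(1,2) GB conc TsT _ eta] LTs by blast
  have low: "c \<le> ?h y" if "y \<in> Ts" for y
  proof -
    obtain z where z: "z \<in> T" "y = s *\<^sub>R z + (1 - s) *\<^sub>R x0" using \<open>y \<in> Ts\<close> unfolding Ts_def by auto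
    have "G y \<ge> (1 - s) * G x0 + s * G z"
      using concave_onD[OF conc, of s x0 z] s0 s1 z x0 by (simp add: add.commute)
    moreover have "G z \<ge> a" "G x0 \<le> b" using GB z x0 by auto
    ultimately have h1: "G y \<ge> (1 - s) * G x0 + s * G z" "G z \<ge> a" "G x0 \<le> b" by auto
    have h2: "s * G z \<ge> s * a" using h1(2) s0 by (simp add: mult_left_mono)
    have h3: "s * G x0 \<le> s * b" using h1(3) s0 by (simp add: mult_left_mono)
    have "G y \<ge> G x0 - s * (b - a)"
      using h1(1) h2 h3 by (simp add: algebra_simps)
    then have "\<eta> * G y \<ge> \<eta> * (G x0 - s * (b - a))" using eta by (simp add: mult_left_mono)
    moreover have "\<eta> * (s * (b - a)) = d" unfolding s_def using eta ab by simp
    ultimately have "\<eta> * G y \<ge> \<eta> * G x0 - d" by (simp add: algebra_simps)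
    then show ?thesis unfolding c_def by simp
  qed
  have "c * measure lebesgue Ts = integral Ts (\<lambda>y. c)"
    using lmeasure_integral[OF LTs] by (simp add: integral_mult_right[symmetric])
  also have "\<dots> \<le> integral Ts ?h"
    by (intro integral_le integrable_on_const LTs hTs) (use low in auto)
  also have "\<dots> \<le> integral T ?h"
    by (intro integral_subset_le TsT hTs hT) auto
  finally have I: "c * s ^ DIM('b) * measure lebesgue T \<le> integral T ?h"
    using mTs by (simp add: mult.assoc)
  define I where "I = integral T ?h"
  define V where "V = measure lebesgue T"
  have csV: "c * s ^ DIM('b) \<le> I / V" using I V0 unfolding I_def V_def by (simp add: field_simps)
  have pos: "c * s ^ DIM('b) > 0" using c0 s0 by simp
  have "ln (c * s ^ DIM('b)) \<le> ln (I / V)" using csV pos by simp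
  moreover have "ln (c * s ^ DIM('b)) = \<eta> * G x0 - d + d * ln s"
    using c0 s0 by (simp add: ln_mult ln_realpow c_def d_def)
  moreover have "d * ln (\<eta> * exp 1 * (b - a) / d) = d - d * ln s"
  proof -
    have "\<eta> * exp 1 * (b - a) / d = exp 1 / s" unfolding s_def using d0 eta ab by simp
    then have "ln (\<eta> * exp 1 * (b - a) / d) = 1 - ln s" using s0 by (simp add: ln_div)
    then show ?thesis by (simp add: right_diff_distrib)
  qed
  ultimately have "\<eta> * G x0 \<le> ln (I / V) + d * ln (\<eta> * exp 1 * (b - a) / d)"
    by linarith
  then have "G x0 \<le> (ln (I / V) + d * ln (\<eta> * exp 1 * (b - a) / d)) / \<eta>"
    using eta by (simp add: pos_le_divide_eq mult.commute)
  also have "(ln (I / V) + d * ln (\<eta> * exp 1 * (b - a) / d)) / \<eta>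
      = 1 / \<eta> * ln (I / V) + d / \<eta> * ln (\<eta> * exp 1 * (b - a) / d)"
    by (simp add: add_divide_distrib)
  finally have fin: "G x0 \<le> 1 / \<eta> * ln (I / V) + d / \<eta> * ln (\<eta> * exp 1 * (b - a) / d)" .
  show ?thesis using fin unfolding I_def V_def d_def .
qed


theorem lemma2:
  fixes S A :: "'a::euclidean_space set"
    and g :: "'b::euclidean_space \<Rightarrow> 'a"
    and F :: "'a \<Rightarrow> real"
    and a b \<eta> :: real
  assumes "affine A" and "aff_dim A = int DIM('b)" and "S \<subseteq> A"
    and "compact S" and "convex S"
    and "\<exists>U. openin (top_of_set A) U \<and> U \<noteq> {} \<and> U \<subseteq> S"
    and "affine_isometric_param g A"
    and "a < b" and "\<forall>x\<in>S. F x \<in> {a..b}" and "concave_on S F"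
    and "\<eta> > 0" and "\<eta> * (b - a) \<ge> real DIM('b)"
  shows "(SUP x\<in>S. F x) \<le>
           1 / \<eta> * ln (integral (g -` S) (\<lambda>y. exp (\<eta> * F (g y))) / measure lebesgue (g -` S))
           + real DIM('b) / \<eta> * ln (\<eta> * exp 1 * (b - a) / real DIM('b))"
proof -
  obtain p L where L: "linear L" "\<And>x. norm (L x) = norm x" "\<And>y. g y = p + L y"
    and rg: "range g = A"
    using assms(7) unfolding affine_isometric_param_def by blast
  define T where "T = g -` S"
  have aff: "g (u *\<^sub>R x + v *\<^sub>R y) = u *\<^sub>R g x + v *\<^sub>R g y" if "u + v = 1" for u v x y
  proof -
    have "g (u *\<^sub>R x + v *\<^sub>R y) = (u + v) *\<^sub>R p + u *\<^sub>R L x + v *\<^sub>R L y"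
      using that L by (simp add: linear_add linear_scale)
    also have "\<dots> = u *\<^sub>R g x + v *\<^sub>R g y" using L(3) by (simp add: algebra_simps)
    finally show ?thesis .
  qed
  have gc: "continuous_on UNIV g"
  proof -
    have "bounded_linear L" using L(1) linear_conv_bounded_linear by blast
    then have "continuous_on UNIV L" using linear_continuous_on by blast
    then have "continuous_on UNIV (\<lambda>y. p + L y)" by (intro continuous_intros)
    moreover have "g = (\<lambda>y. p + L y)" using L(3) by auto
    ultimately show ?thesis by simp
  qed
  have cT: "closed T" unfolding T_def
    using continuous_closed_vimage[OF compact_imp_closed[OF assms(4)]] gc
    by (auto simp add: continuous_on_eq_continuous_at)
  have bT: "bounded T"
  proof -
    obtain B where B: "\<forall>x\<in>S. norm x \<le> B" using compact_imp_bounded[OF assms(4)] bounded_iff by blast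
    have "norm y \<le> B + norm p" if "y \<in> T" for y
    proof -
      have "norm y = norm (g y - p)" using L by simp
      also have "\<dots> \<le> norm (g y) + norm p" by (rule norm_triangle_ineq4)
      also have "\<dots> \<le> B + norm p" using B that unfolding T_def by auto
      finally show ?thesis .
    qed
    then show ?thesis unfolding bounded_iff by blast
  qed
  have compT: "compact T" using cT bT compact_eq_bounded_closed by blast
  have convT: "convex T"
    unfolding convex_def T_def
  proof (intro ballI allI impI)
    fix x y u v assume "x \<in> g -` S" "y \<in> g -` S" "(0::real) \<le> u" "0 \<le> v" "u + v = 1"
    then show "u *\<^sub>R x + v *\<^sub>R y \<in> g -` S"
      using assms(5) aff unfolding convex_def by simp
  qed
  obtain U where U: "openin (top_of_set A) U" "U \<noteq> {}" "U \<subseteq> S" using assms(6) by blast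
  obtain V where V: "open V" "U = A \<inter> V" using U(1) openin_open by blast
  have gU: "g -` U = g -` V" using V(2) rg by auto
  have "open (g -` V)" using continuous_open_vimage[OF V(1)] gc
    by (auto simp add: continuous_on_eq_continuous_at)
  moreover have "g -` U \<noteq> {}" using U(2) U(3) assms(3) rg by blast
  moreover have "g -` U \<subseteq> T" using U(3) unfolding T_def by auto
  ultimately have intT: "interior T \<noteq> {}" using gU interior_maximal by (metis subset_empty)
  define G where "G = (\<lambda>y. F (g y))"
  have GB: "\<forall>y\<in>T. G y \<in> {a..b}" using assms(9) unfolding T_def G_def by auto
  have concG: "concave_on T G"
    unfolding concave_on_iff
  proof (intro conjI convT ballI allI impI)
    fix x y u v assume xy: "x \<in> T" "y \<in> T" "(0::real) \<le> u" "0 \<le> v" "u + v = 1"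
    have "u * F (g x) + v * F (g y) \<le> F (u *\<^sub>R g x + v *\<^sub>R g y)"
      using assms(10) xy unfolding concave_on_iff T_def by auto
    then show "u * G x + v * G y \<le> G (u *\<^sub>R x + v *\<^sub>R y)"
      unfolding G_def using aff xy(5) by simp
  qed
  have Sne: "S \<noteq> {}" using U by blast
  show ?thesis
  proof (rule cSUP_least[OF Sne])
    fix x assume "x \<in> S"
    then obtain y where y: "x = g y" using assms(3) rg by blast
    then have yT: "y \<in> T" using \<open>x \<in> S\<close> unfolding T_def by simp
    have "G y \<le> 1 / \<eta> * ln (integral T (\<lambda>y. exp (\<eta> * G y)) / measure lebesgue T)
           + real DIM('b) / \<eta> * ln (\<eta> * exp 1 * (b - a) / real DIM('b))"
      by (rule core[OF compT convT intT GB concG assms(8) assms(11) assms(12) yT])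
    then show "F x \<le> 1 / \<eta> * ln (integral (g -` S) (\<lambda>y. exp (\<eta> * F (g y))) / measure lebesgue (g -` S))
           + real DIM('b) / \<eta> * ln (\<eta> * exp 1 * (b - a) / real DIM('b))"
      unfolding G_def T_def y .
  qed
qed

end
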